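(* Let $G=(V,E)$ be a graph with edge set partitioned into color classes $E_1,\dots,E_k$, all color bounds equal to $1$, and consider the natural LP relaxation $\mathcal{M}_c=\{x\in[0,1]^E:\ \sum_{e\in\delta(v)}x_e\le 1\ \forall v\in V,\ \sum_{e\in E_j}x_e\le 1\ \forall j\}$. Then after 2 rounds of the Sherali–Adams hierarchy applied to $\mathcal{M}_c$, every bi-chromatic constraint is implied: every $x\in F_2$ satisfies $\sum_{e\in BC}x_e\le 1$ for every bi-chromatic 4-cycle $BC$ of $G$.
   Context: A bi-chromatic 4-cycle is a cycle $e_1,e_3,e_2,e_4$ of length 4 in $G$ whose edges alternate between two color classes (two opposite edges $e_1,e_2$ in one class, the other two $e_3,e_4$ in another class). $\delta(v)$ is the set of edges incident to $v$. Sherali–Adams hierarchy: for $F_0=\{x\in[0,1]^n: a_i^Tx\le b_i\}$ (box constraints $x_j\ge0$, $1-x_j\ge0$ included), the level-$\psi$ lifted system has variables $y_Z$, $Z\subseteq[n]$, $y_\emptyset=1$, and for all disjoint $\Gamma,\Delta\subseteq[n]$ with $|\Gamma|+|\Delta|\le\psi$ the constraints $\sum_{H\subseteq\Delta}(-1)^{|H|}(b_i y_{\Gamma\cup H}-\sum_j a_{ij}y_{\Gamma\cup H\cup\{j\}})\ge0$ for each $i$ and $\sum_{H\subseteq\Delta}(-1)^{|H|}y_{\Gamma\cup H}\ge 0$ (linearizations of products of constraints with $\prod_{\gamma\in\Gamma}x_\gamma\prod_{\delta\in\Delta}(1-x_\delta)$, using $x_i^2=x_i$ and $\prod_{\zeta\in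 Z}x_\zeta\mapsto y_Z$); $F_\psi$ is the projection onto $y_{\{i\}}=x_i$. *)

theory Defs
  imports Complex_Main
begin

text \<open>Sherali-Adams level-psi projection of the polytope
  {x. a^T x <= b for all rows (a,b) in P}, variables indexed by the finite set N.
  The box constraints must be included among the rows P.
  y Z stands for the linearization of the product of x_z, z in Z.\<close>
definition SA :: "'i set \<Rightarrow> (('i \<Rightarrow> real) \<times> real) set \<Rightarrow> nat \<Rightarrow> ('i \<Rightarrow> real) set" where
  "SA N P \<psi> = {x. \<exists>y :: 'i set \<Rightarrow> real.
      y {} = 1 \<and> (\<forall>i\<in>N. y {i} = x i) \<and>
      (\<forall>\<Gamma> \<Delta>. \<Gamma> \<subseteq> N \<longrightarrow> \<Delta> \<subseteq> N \<longrightarrow> \<Gamma> \<inter> \<Delta> = {} \<longrightarrow> card \<Gamma> + card \<Delta> \<le> \<psi> \<longrightarrow>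
         (\<forall>(a, b)\<in>P. (\<Sum>H\<in>Pow \<Delta>. (-1) ^ card H *
               (b * y (\<Gamma> \<union> H) - (\<Sum>j\<in>N. a j * y (\<Gamma> \<union> H \<union> {j})))) \<ge> 0) \<and>
         (\<Sum>H\<in>Pow \<Delta>. (-1) ^ card H * y (\<Gamma> \<union> H)) \<ge> 0)}"

text \<open>Rows of the natural LP relaxation M_c (all colour bounds 1) of a graph with
  vertex set V, edge set E (edges are 2-element vertex sets) and colouring col;
  colour classes are the fibres of col on E.\<close>
definition Mc_rows :: "'v set \<Rightarrow> 'v set set \<Rightarrow> ('v set \<Rightarrow> 'c) \<Rightarrow> (('v set \<Rightarrow> real) \<times> real) set" where
  "Mc_rows V E col =
     {((\<lambda>e. if v \<in> e then 1 else 0), 1) | v. v \<in> V} \<union>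
     {((\<lambda>e. if col e = c then 1 else 0), 1) | c. c \<in> col ` E} \<union>
     {((\<lambda>e. if e = f then -1 else 0), 0) | f. f \<in> E} \<union>
     {((\<lambda>e. if e = f then 1 else 0), 1) | f. f \<in> E}"

definition bichromatic_4cycle ::
  "'v set set \<Rightarrow> ('v set \<Rightarrow> 'c) \<Rightarrow> 'v set \<Rightarrow> 'v set \<Rightarrow> 'v set \<Rightarrow> 'v set \<Rightarrow> bool" where
  "bichromatic_4cycle E col e1 e3 e2 e4 \<longleftrightarrow>
     (\<exists>a b c d. distinct [a, b, c, d] \<and>
        e1 = {a, b} \<and> e3 = {b, c} \<and> e2 = {c, d} \<and> e4 = {d, a}) \<and>
     e1 \<in> E \<and> e2 \<in> E \<and> e3 \<in> E \<and> e4 \<in> E \<and>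
     col e1 = col e2 \<and> col e3 = col e4 \<and> col e1 \<noteq> col e3"

end

theory Submission
  imports Defs
begin

lemma pow2:
  fixes F :: "'i set \<Rightarrow> real"
  assumes "a \<noteq> b"
  shows "(\<Sum>H\<in>Pow {a,b}. (-1) ^ card H * F H) = F {} - F {a} - F {b} + F {a,b}"
proof -
  have P: "Pow {a,b} = {{}, {a}, {b}, {a,b}}" by (auto simp: Pow_insert)
  show ?thesis unfolding P using assms by (simp add: doubleton_eq_iff)
qed

lemma sum_delta_neg:
  fixes t :: "'i \<Rightarrow> real"
  assumes "finite E" "f \<in> E"
  shows "(\<Sum>j\<in>E. (if j = f then -1 else 0) * t j) = - t f"
proof -
  have "(\<lambda>j. (if j = f then -1 else 0) * t j) = (\<lambda>j. if j = f then - t j else 0)" by auto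
  then show ?thesis using assms by (simp only: sum.delta) simp
qed

lemma sum_ge2:
  fixes g :: "'i \<Rightarrow> real"
  assumes "finite E" "f \<in> E" "e \<in> E" "e \<noteq> f" "\<And>j. j \<in> E \<Longrightarrow> 0 \<le> g j"
  shows "g f + g e \<le> sum g E"
proof -
  have "sum g {f,e} \<le> sum g E"
    by (rule sum_mono2) (use assms in auto)
  then show ?thesis using assms by simp
qed

lemma card2: "card {a, b} \<le> 2"
  by (cases "a = b") auto

lemma pair_le0:
  fixes y :: "'i set \<Rightarrow> real"
  assumes fin: "finite E"
  and R: "\<And>\<Gamma> \<Delta> a b. \<Gamma> \<subseteq> E \<Longrightarrow> \<Delta> \<subseteq> E \<Longrightarrow> \<Gamma> \<inter> \<Delta> = {} \<Longrightarrow> card \<Gamma> + card \<Delta> \<le> 2 \<Longrightarrow> (a,b) \<in> P \<Longrightarrow>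
     0 \<le> (\<Sum>H\<in>Pow \<Delta>. (-1) ^ card H * (b * y (\<Gamma> \<union> H) - (\<Sum>j\<in>E. a j * y (\<Gamma> \<union> H \<union> {j}))))"
  and N: "\<And>\<Gamma> \<Delta>. \<Gamma> \<subseteq> E \<Longrightarrow> \<Delta> \<subseteq> E \<Longrightarrow> \<Gamma> \<inter> \<Delta> = {} \<Longrightarrow> card \<Gamma> + card \<Delta> \<le> 2 \<Longrightarrow>
     0 \<le> (\<Sum>H\<in>Pow \<Delta>. (-1) ^ card H * y (\<Gamma> \<union> H))"
  and row: "((\<lambda>j. if Q j then 1 else 0), 1) \<in> P"
  and f: "f \<in> E" "Q f" and e: "e \<in> E" "Q e" "e \<noteq> f"
  shows "y {f, e} \<le> 0"
proof -
  have nn: "0 \<le> y {f, j}" if j: "j \<in> E" for j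
    using N[of "{f,j}" "{}"] j f card2[of f j] by simp
  have r: "0 \<le> y {f} - (\<Sum>j\<in>E. (if Q j then 1 else 0) * y {f, j})"
    using R[OF _ _ _ _ row, of "{f}" "{}"] f by (simp add: insert_commute)
  have s: "(if Q f then 1 else 0) * y {f, f} + (if Q e then 1 else 0) * y {f, e}
       \<le> (\<Sum>j\<in>E. (if Q j then 1 else 0) * y {f, j})"
    by (rule sum_ge2) (use fin f e nn in auto)
  show ?thesis using r s f e by simp
qed

theorem mainTheorem6:
  fixes V :: "'v set" and E :: "'v set set" and col :: "'v set \<Rightarrow> 'c"
    and x :: "'v set \<Rightarrow> real" and e1 e2 e3 e4 :: "'v set"
  assumes "finite V"
    and "E \<subseteq> {{u, v} | u v. u \<in> V \<and> v \<in> V \<and> u \<noteq> v}"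
    and "x \<in> SA E (Mc_rows V E col) 2"
    and "bichromatic_4cycle E col e1 e3 e2 e4"
  shows "x e1 + x e3 + x e2 + x e4 \<le> 1"
proof -
  have "E \<subseteq> (\<lambda>(u,v). {u,v}) ` (V \<times> V)" using assms(2) by auto
  then have finE: "finite E" using assms(1) finite_subset by blast
  have EV: "\<And>e. e \<in> E \<Longrightarrow> e \<subseteq> V" using assms(2) by blast
  obtain y :: "'v set set \<Rightarrow> real" where yall: "y {} = 1 \<and> (\<forall>i\<in>E. y {i} = x i) \<and> (\<forall>\<Gamma> \<Delta>. \<Gamma> \<subseteq> E \<longrightarrow> \<Delta> \<subseteq> E \<longrightarrow> \<Gamma> \<inter> \<Delta> = {} \<longrightarrow> card \<Gamma> + card \<Delta> \<le> 2 \<longrightarrow>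
         (\<forall>(a, b)\<in>Mc_rows V E col. (\<Sum>H\<in>Pow \<Delta>. (-1) ^ card H *
               (b * y (\<Gamma> \<union> H) - (\<Sum>j\<in>E. a j * y (\<Gamma> \<union> H \<union> {j})))) \<ge> 0) \<and>
         (\<Sum>H\<in>Pow \<Delta>. (-1) ^ card H * y (\<Gamma> \<union> H)) \<ge> 0)"
    using assms(3) unfolding SA_def mem_Collect_eq by (rule exE)
  note y0 = conjunct1[OF yall]
  note yx = conjunct1[OF conjunct2[OF yall]]
  note C = conjunct2[OF conjunct2[OF yall]]

  have R: "\<And>\<Gamma> \<Delta> a b. \<Gamma> \<subseteq> E \<Longrightarrow> \<Delta> \<subseteq> E \<Longrightarrow> \<Gamma> \<inter> \<Delta> = {} \<Longrightarrow> card \<Gamma> + card \<Delta> \<le> 2 \<Longrightarrow> (a,b) \<in> Mc_rows V E col \<Longrightarrow>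
     0 \<le> (\<Sum>H\<in>Pow \<Delta>. (-1) ^ card H * (b * y (\<Gamma> \<union> H) - (\<Sum>j\<in>E. a j * y (\<Gamma> \<union> H \<union> {j}))))"
  proof -
    fix \<Gamma> \<Delta> a b
    assume h: "\<Gamma> \<subseteq> E" "\<Delta> \<subseteq> E" "\<Gamma> \<inter> \<Delta> = {}" "card \<Gamma> + card \<Delta> \<le> 2" "(a,b) \<in> Mc_rows V E col"
    show "0 \<le> (\<Sum>H\<in>Pow \<Delta>. (-1) ^ card H * (b * y (\<Gamma> \<union> H) - (\<Sum>j\<in>E. a j * y (\<Gamma> \<union> H \<union> {j}))))"
      using bspec[OF conjunct1[OF C[rule_format, OF h(1-4)]] h(5)] by simp
  qed
  have N: "\<And>\<Gamma> \<Delta>. \<Gamma> \<subseteq> E \<Longrightarrow> \<Delta> \<subseteq> E \<Longrightarrow> \<Gamma> \<inter> \<Delta> = {} \<Longrightarrow> card \<Gamma> + card \<Delta> \<le> 2 \<Longrightarrow>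
     0 \<le> (\<Sum>H\<in>Pow \<Delta>. (-1) ^ card H * y (\<Gamma> \<union> H))"
  proof -
    fix \<Gamma> \<Delta>
    assume h: "\<Gamma> \<subseteq> E" "\<Delta> \<subseteq> E" "\<Gamma> \<inter> \<Delta> = {}" "card \<Gamma> + card \<Delta> \<le> 2"
    show "0 \<le> (\<Sum>H\<in>Pow \<Delta>. (-1) ^ card H * y (\<Gamma> \<union> H))"
      using conjunct2[OF C[rule_format, OF h(1-4)]] by simp
  qed
  obtain a b c d where abcd: "distinct [a, b, c, d]" and
     ed: "e1 = {a, b}" "e3 = {b, c}" "e2 = {c, d}" "e4 = {d, a}"
    and inE: "e1 \<in> E" "e2 \<in> E" "e3 \<in> E" "e4 \<in> E"
    and cols: "col e1 = col e2" "col e3 = col e4" "col e1 \<noteq> col e3"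
    using assms(4) unfolding bichromatic_4cycle_def by blast
  have dist: "e1 \<noteq> e2" "e1 \<noteq> e3" "e1 \<noteq> e4" "e2 \<noteq> e3" "e2 \<noteq> e4" "e3 \<noteq> e4"
    using abcd unfolding ed by (auto simp: doubleton_eq_iff)
  have inV: "a \<in> V" "b \<in> V" "c \<in> V" "d \<in> V" using EV inE unfolding ed by auto
  have vrow: "((\<lambda>e. if v \<in> e then 1 else 0), 1) \<in> Mc_rows V E col" if "v \<in> V" for v
    using that unfolding Mc_rows_def by blast
  have crow: "((\<lambda>e'. if col e' = col e then 1 else 0), 1) \<in> Mc_rows V E col" if "e \<in> E" for e
    using that unfolding Mc_rows_def by blast
  have brow: "((\<lambda>e. if e = f then -1 else 0), 0) \<in> Mc_rows V E col" if "f \<in> E" for f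
    using that unfolding Mc_rows_def by blast
  have z13: "y {e1, e3} \<le> 0"
    apply (rule pair_le0[where P = "Mc_rows V E col" and y = y and Q = "\<lambda>j. b \<in> j", OF finE])
       apply (rule R; assumption)
      apply (rule N; assumption)
     apply (rule vrow[OF inV(2)])
    using inE dist  by (auto simp: ed)
  have z23: "y {e2, e3} \<le> 0"
    apply (rule pair_le0[where P = "Mc_rows V E col" and y = y and Q = "\<lambda>j. c \<in> j", OF finE])
       apply (rule R; assumption)
      apply (rule N; assumption)
     apply (rule vrow[OF inV(3)])
    using inE dist  by (auto simp: ed)
  have z14: "y {e1, e4} \<le> 0"
    apply (rule pair_le0[where P = "Mc_rows V E col" and y = y and Q = "\<lambda>j. a \<in> j", OF finE])
       apply (rule R; assumption)
      apply (rule N; assumption)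
     apply (rule vrow[OF inV(1)])
    using inE dist  by (auto simp: ed)
  have z24: "y {e2, e4} \<le> 0"
    apply (rule pair_le0[where P = "Mc_rows V E col" and y = y and Q = "\<lambda>j. d \<in> j", OF finE])
       apply (rule R; assumption)
      apply (rule N; assumption)
     apply (rule vrow[OF inV(4)])
    using inE dist  by (auto simp: ed)
  have z12: "y {e1, e2} \<le> 0"
    apply (rule pair_le0[where P = "Mc_rows V E col" and y = y and Q = "\<lambda>j. col j = col e1", OF finE])
       apply (rule R; assumption)
      apply (rule N; assumption)
     apply (rule crow[OF inE(1)])
    using inE dist cols by (auto simp: ed)
  have t3: "0 \<le> y {e1, e2, e3}"
    using R[OF _ _ _ _ brow[OF inE(3)], of "{e1,e2}" "{}"] inE card2[of e1 e2]
    by (simp add: sum_delta_neg[OF finE] insert_commute)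
  have t4: "0 \<le> y {e1, e2, e4}"
    using R[OF _ _ _ _ brow[OF inE(4)], of "{e1,e2}" "{}"] inE card2[of e1 e2]
    by (simp add: sum_delta_neg[OF finE] insert_commute)
  define g where "g j = y {j} - y {j, e1} - y {j, e2} + y {j, e1, e2}" for j
  have gnn: "0 \<le> g j" if j: "j \<in> E" for j
  proof -
    have "0 \<le> (\<Sum>H\<in>Pow {e1,e2}. (-1) ^ card H * (0 * y ({} \<union> H) -
       (\<Sum>i\<in>E. (if i = j then -1 else 0) * y ({} \<union> H \<union> {i}))))"
      by (rule R[OF _ _ _ _ brow[OF j]]) (use inE dist card2[of e1 e2] in auto)
    then show ?thesis
      by (simp add: pow2[OF dist(1)] sum_delta_neg[OF finE j] g_def)
  qed
  have main: "0 \<le> (\<Sum>H\<in>Pow {e1,e2}. (-1) ^ card H * (1 * y ({} \<union> H) -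
       (\<Sum>j\<in>E. (if col j = col e3 then 1 else 0) * y ({} \<union> H \<union> {j}))))"
    by (rule R[OF _ _ _ _ crow[OF inE(3)]]) (use inE dist card2[of e1 e2] in auto)
  then have main2: "0 \<le> 1 - y {e1} - y {e2} + y {e1, e2} - (\<Sum>j\<in>E. (if col j = col e3 then 1 else 0) * g j)"
  proof -
    have gs: "(\<Sum>j\<in>E. (if col j = col e3 then 1 else 0) * g j) =
      (\<Sum>j\<in>E. (if col j = col e3 then 1 else 0) * y {j}) - (\<Sum>j\<in>E. (if col j = col e3 then 1 else 0) * y {j, e1})
      - (\<Sum>j\<in>E. (if col j = col e3 then 1 else 0) * y {j, e2}) + (\<Sum>j\<in>E. (if col j = col e3 then 1 else 0) * y {j, e1, e2})"
      by (simp add: g_def algebra_simps sum.distrib sum_subtractf)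
    show ?thesis using main unfolding gs by (simp add: pow2[OF dist(1)] y0)
  qed
  have sg: "(if col e3 = col e3 then 1 else 0) * g e3 + (if col e4 = col e3 then 1 else 0) * g e4
      \<le> (\<Sum>j\<in>E. (if col j = col e3 then 1 else 0) * g j)"
    by (rule sum_ge2) (use finE inE dist gnn in auto)
  have g3: "y {e3} \<le> g e3" using z13 z23 t3 unfolding g_def by (simp add: insert_commute)
  have g4: "y {e4} \<le> g e4" using z14 z24 t4 unfolding g_def by (simp add: insert_commute)
  show ?thesis using main2 sg g3 g4 z12 cols yx inE by simp
qed

end
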